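(* Let $\mathcal D$ be a finite nonempty set. Let $\Psi:\mathcal H^{\mathcal D}_{P,R}\to(\mathcal H^{\mathcal D}_{P,R})^{*g}$ be the unique Hopf algebra morphism such that $\Psi\circ B_d^+=\gamma_d^{*g}\circ\Psi$ for all $d\in\mathcal D$ (such a morphism exists and is unique). Then $\Psi$ is an isomorphism of graded Hopf algebras.
   Context: $\mathcal H^{\mathcal D}_{P,R}$ is the Hopf algebra of planar rooted trees decorated by $\mathcal D$: the free associative unital $\mathbb Q$-algebra on the set of planar rooted trees (finite trees with a root, embedded in the plane, edges oriented away from the root) whose vertices carry decorations in $\mathcal D$; the basis is the set of planar forests $t_1\cdots t_n$ ($1$ = empty forest). Coproduct: $\Delta(F)=\sum_cP^c(F)\otimes R^c(F)$ over all cuts $c$ of $F=t_1\cdots t_n$, where a cut is a tuple $(c_i)$, each $c_i$ being either the empty cut of $t_i$ ($P=1,R=t_i$), the total cut ($P=t_i,R=1$), or an admissible cut, i.e. a nonempty set of edges of $t_i$ such that every oriented path meets at most one of them, with $R^{c_i}(t_i)$ the component of the root and $P^{c_i}(t_i)$ the left-to-right planar forest of the other components; $P^c(F)=\prod_iP^{c_i}(t_i)$, $R^c(F)=\prod_iR^{c_i}(t_i)$. Counit: $\varepsilon(F)=0$ for $F\ne1$. It is graded by weight (number of vertices), with finite-dimensional components. $B_d^+$ grafts a forest $t_1\cdots t_n$ (in this order) on a new root decorated by $d$, and $\bullet_d=B_d^+(1)$. For a graded Hopf algebra $A=\bigoplus_nA_n$ with $A_0$ one-dimensional and finite-dimensional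 $A_n$, the graded dual $A^{*g}=\bigoplus_nA_n^*$ is the graded Hopf algebra with $(fg)(x)=(f\otimes g)(\Delta(x))$, unit $\varepsilon$, $\Delta(f)(x\otimes y)=f(xy)$, counit $f\mapsto f(1)$, antipode $f\mapsto f\circ S$, $(A^{*g})_n=A_n^*$. Define the linear map $\gamma_d:\mathcal H^{\mathcal D}_{P,R}\to\mathcal H^{\mathcal D}_{P,R}$ by $\gamma_d(1)=0$, $\gamma_d(t_1\cdots t_n)=t_1\cdots t_{n-1}$ if $t_n=\bullet_d$ and $0$ otherwise, and $\gamma_d^{*g}(f)=f\circ\gamma_d$ its transpose on the graded dual. *)

theory Defs
  imports Complex_Main
begin

datatype 'd ptree = Node 'd "'d ptree list"

type_synonym 'd forest = "'d ptree list"

definition forest_on :: "'d set \<Rightarrow> 'd forest \<Rightarrow> bool" where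
  "forest_on D F \<longleftrightarrow> (\<forall>t\<in>set F. set_ptree t \<subseteq> D)"

fun tweight :: "'d ptree \<Rightarrow> nat" where
  "tweight (Node d ts) = Suc (sum_list (map tweight ts))"

definition fweight :: "'d forest \<Rightarrow> nat" where
  "fweight F = sum_list (map tweight F)"

text \<open>Non-total cuts (empty cut or admissible cut) of a tree, each cut listed once,
  returned as pair (pruned planar forest P, root component R).  For the children
  of a vertex, in left-to-right order, either the edge to the child is cut (the
  whole child subtree goes to P) or it is not, and then an empty/admissible cut of
  the child subtree is chosen.\<close>
primrec cuts :: "'d ptree \<Rightarrow> ('d forest \<times> 'd ptree) list"
  and cuts_ch :: "'d ptree list \<Rightarrow> ('d forest \<times> 'd ptree list) list" where
  "cuts (Node d ts) = map (\<lambda>(P, rs). (P, Node d rs)) (cuts_ch ts)"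
| "cuts_ch [] = [([], [])]"
| "cuts_ch (t # ts) =
     concat (map (\<lambda>(P1, rs1). map (\<lambda>(P2, rs2). (P1 @ P2, rs1 @ rs2)) (cuts_ch ts))
       (([t], []) # map (\<lambda>(P, r). (P, [r])) (cuts t)))"

text \<open>All cuts c of a forest, as list of pairs (P^c(F), R^c(F)) (total cut included).\<close>
fun fcuts :: "'d forest \<Rightarrow> ('d forest \<times> 'd forest) list" where
  "fcuts [] = [([], [])]"
| "fcuts (t # ts) =
     concat (map (\<lambda>(P1, R1). map (\<lambda>(P2, R2). (P1 @ P2, R1 @ R2)) (fcuts ts))
       (([t], []) # map (\<lambda>(P, r). (P, [r])) (cuts t)))"

text \<open>Vectors of H are coordinate functions on the basis of planar forests
  (finitely supported, supported on D-decorated forests).\<close>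
type_synonym 'd hvec = "'d forest \<Rightarrow> rat"
type_synonym 'd hvec2 = "'d forest \<times> 'd forest \<Rightarrow> rat"

definition Hc :: "'d set \<Rightarrow> 'd hvec set" where
  "Hc D = {x. finite {F. x F \<noteq> 0} \<and> (\<forall>F. x F \<noteq> 0 \<longrightarrow> forest_on D F)}"

definition basis :: "'d forest \<Rightarrow> 'd hvec" where
  "basis F = (\<lambda>G. if G = F then 1 else 0)"

definition hmult :: "'d hvec \<Rightarrow> 'd hvec \<Rightarrow> 'd hvec" where
  "hmult x y = (\<lambda>F. \<Sum>i\<le>length F. x (take i F) * y (drop i F))"

definition hunit :: "'d hvec" where
  "hunit = basis []"

text \<open>Coproduct, with values in H \<otimes> H = functions on pairs of forests.\<close>
definition hcoprod :: "'d hvec \<Rightarrow> 'd hvec2" where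
  "hcoprod x = (\<lambda>(A, B). \<Sum>F | x F \<noteq> 0. x F * of_nat (count_list (fcuts F) (A, B)))"

definition hcounit :: "'d hvec \<Rightarrow> rat" where
  "hcounit x = x []"

definition Bplus :: "'d \<Rightarrow> 'd hvec \<Rightarrow> 'd hvec" where
  "Bplus d x = (\<lambda>F. case F of [Node d' ts] \<Rightarrow> (if d' = d then x ts else 0) | _ \<Rightarrow> 0)"

text \<open>An element of the graded dual (direct sum of the duals of the homogeneous
  components) is given by its values on the basis of planar forests; it vanishes on
  all components of large enough weight.  Pairing with x : f(x) = sum_F f F * x F.\<close>
definition Dc :: "'d set \<Rightarrow> 'd hvec set" where
  "Dc D = {f. (\<forall>F. f F \<noteq> 0 \<longrightarrow> forest_on D F) \<and> (\<exists>N. \<forall>F. f F \<noteq> 0 \<longrightarrow> fweight F \<le> N)}"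

text \<open>(fg)(F) = (f \<otimes> g)(Delta F).\<close>
definition dmult :: "'d hvec \<Rightarrow> 'd hvec \<Rightarrow> 'd hvec" where
  "dmult f g = (\<lambda>F. sum_list (map (\<lambda>(P, R). f P * g R) (fcuts F)))"

text \<open>Unit of the dual = counit of H.\<close>
definition dunit :: "'d hvec" where
  "dunit = basis []"

text \<open>Delta(f)(F1 \<otimes> F2) = f(F1 F2).\<close>
definition dcoprod :: "'d hvec \<Rightarrow> 'd hvec2" where
  "dcoprod f = (\<lambda>(A, B). f (A @ B))"

definition dcounit :: "'d hvec \<Rightarrow> rat" where
  "dcounit f = f []"

text \<open>Transpose of gamma_d: (gamma_d^{*g} f)(F) = f(gamma_d F).\<close>
definition gamma_dual :: "'d \<Rightarrow> 'd hvec \<Rightarrow> 'd hvec" where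
  "gamma_dual d f = (\<lambda>F. if F \<noteq> [] \<and> last F = Node d [] then f (butlast F) else 0)"

text \<open>Tensor square of a linear map H \<rightarrow> H^{*g}, on H \<otimes> H.\<close>
definition tensmap :: "('d hvec \<Rightarrow> 'd hvec) \<Rightarrow> 'd hvec2 \<Rightarrow> 'd hvec2" where
  "tensmap \<Psi> z = (\<lambda>(A, B). \<Sum>(P, R) | z (P, R) \<noteq> 0.
                        z (P, R) * \<Psi> (basis P) A * \<Psi> (basis R) B)"

definition hopf_morph :: "'d set \<Rightarrow> ('d hvec \<Rightarrow> 'd hvec) \<Rightarrow> bool" where
  "hopf_morph D \<Psi> \<longleftrightarrow>
     (\<forall>x\<in>Hc D. \<Psi> x \<in> Dc D) \<and>
     (\<forall>x\<in>Hc D. \<forall>y\<in>Hc D. \<Psi> (\<lambda>F. x F + y F) = (\<lambda>F. \<Psi> x F + \<Psi> y F)) \<and>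
     (\<forall>x\<in>Hc D. \<forall>c. \<Psi> (\<lambda>F. c * x F) = (\<lambda>F. c * \<Psi> x F)) \<and>
     (\<forall>x\<in>Hc D. \<forall>y\<in>Hc D. \<Psi> (hmult x y) = dmult (\<Psi> x) (\<Psi> y)) \<and>
     \<Psi> hunit = dunit \<and>
     (\<forall>x\<in>Hc D. dcoprod (\<Psi> x) = tensmap \<Psi> (hcoprod x)) \<and>
     (\<forall>x\<in>Hc D. dcounit (\<Psi> x) = hcounit x)"

definition intertwines :: "'d set \<Rightarrow> ('d hvec \<Rightarrow> 'd hvec) \<Rightarrow> bool" where
  "intertwines D \<Psi> \<longleftrightarrow> (\<forall>d\<in>D. \<forall>x\<in>Hc D. \<Psi> (Bplus d x) = gamma_dual d (\<Psi> x))"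

definition graded_map :: "'d set \<Rightarrow> ('d hvec \<Rightarrow> 'd hvec) \<Rightarrow> bool" where
  "graded_map D \<Psi> \<longleftrightarrow> (\<forall>n. \<forall>x\<in>Hc D. (\<forall>F. x F \<noteq> 0 \<longrightarrow> fweight F = n) \<longrightarrow>
                          (\<forall>F. \<Psi> x F \<noteq> 0 \<longrightarrow> fweight F = n))"

definition graded_hopf_iso :: "'d set \<Rightarrow> ('d hvec \<Rightarrow> 'd hvec) \<Rightarrow> bool" where
  "graded_hopf_iso D \<Psi> \<longleftrightarrow> hopf_morph D \<Psi> \<and> graded_map D \<Psi> \<and> bij_betw \<Psi> (Hc D) (Dc D)"

end

theory Submission
  imports Defs
begin

lemma cuts_ch_eq: "cuts_ch ts = fcuts ts"
  by (induction ts) auto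

definition tc :: "'d ptree \<Rightarrow> ('d forest \<times> 'd forest) list" where
  "tc t = ([t], []) # map (\<lambda>(P, r). (P, [r])) (cuts t)"

definition prodc :: "('d forest \<times> 'd forest) list \<Rightarrow> ('d forest \<times> 'd forest) list \<Rightarrow> ('d forest \<times> 'd forest) list" where
  "prodc xs ys = concat (map (\<lambda>(P1, R1). map (\<lambda>(P2, R2). (P1 @ P2, R1 @ R2)) ys) xs)"

lemma fcuts_Cons: "fcuts (t # ts) = prodc (tc t) (fcuts ts)"
  by (simp add: prodc_def tc_def)

declare fcuts.simps(2)[simp del]

lemma prodc_Nil[simp]: "prodc [] ys = []"
  by (simp add: prodc_def)

lemma cuts_Node[simp]: "cuts (Node d K) = map (\<lambda>(P, rs). (P, Node d rs)) (fcuts K)"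
  by (simp add: cuts_ch_eq)

declare cuts.simps[simp del]

lemma prodc_Nil_left[simp]: "prodc [([],[])] ys = ys"
  by (simp add: prodc_def case_prod_beta)

lemma prodc_Nil_right[simp]: "prodc xs [([],[])] = xs"
  by (induction xs) (auto simp: prodc_def)

lemma prodc_Cons: "prodc (x # xs) ys = map (\<lambda>(P2, R2). (fst x @ P2, snd x @ R2)) ys @ prodc xs ys"
  by (simp add: prodc_def case_prod_beta)

lemma prodc_append: "prodc (xs @ xs') ys = prodc xs ys @ prodc xs' ys"
  by (simp add: prodc_def)

lemma prodc_map_left: "prodc (map (\<lambda>(P2, R2). (a @ P2, b @ R2)) ys) zs
   = map (\<lambda>(P2, R2). (a @ P2, b @ R2)) (prodc ys zs)"
  by (induction ys) (auto simp: prodc_def)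

lemma prodc_assoc: "prodc (prodc xs ys) zs = prodc xs (prodc ys zs)"
  by (induction xs) (auto simp: prodc_Cons prodc_append prodc_map_left)

lemma fcuts_append: "fcuts (A @ B) = prodc (fcuts A) (fcuts B)"
  by (induction A) (auto simp: fcuts_Cons prodc_assoc)

lemma fcuts_single: "fcuts [t] = tc t"
  by (simp add: fcuts_Cons)

lemma sum_prodc: "sum_list (map f (prodc xs ys)) =
   sum_list (map (\<lambda>(P1,R1). sum_list (map (\<lambda>(P2,R2). f (P1@P2, R1@R2)) ys)) xs)"
  by (induction xs) (auto simp: prodc_Cons case_prod_beta o_def)

lemma sum_list_swap: "sum_list (map (\<lambda>x. sum_list (map (f x) ys)) xs)
   = (sum_list (map (\<lambda>y. sum_list (map (\<lambda>x. f x y) xs)) ys) :: 'a::comm_monoid_add)"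
proof (induction xs)
  case (Cons a xs)
  have "sum_list (map (\<lambda>y. f a y + sum_list (map (\<lambda>x. f x y) xs)) ys)
     = sum_list (map (f a) ys) + sum_list (map (\<lambda>y. sum_list (map (\<lambda>x. f x y) xs)) ys)"
    by (rule sum_list_addf)
  then show ?case using Cons by simp
qed simp

lemma filter_prodc:
  assumes "\<And>P1 R1 P2 R2. p (P1@P2, R1@R2) \<longleftrightarrow> pa (P1,R1) \<and> pb (P2,R2)"
  shows "filter p (prodc xs ys) = prodc (filter pa xs) (filter pb ys)"
  using assms by (induction xs) (auto simp: prodc_Cons filter_map o_def case_prod_beta)

lemma mem_prodc: "z \<in> set (prodc xs ys) \<longleftrightarrow>
   (\<exists>P1 R1 P2 R2. (P1,R1) \<in> set xs \<and> (P2,R2) \<in> set ys \<and> z = (P1@P2, R1@R2))"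
  by (force simp: prodc_def)

lemma filter_R_nil: "filter (\<lambda>(P,R). R = []) (fcuts G) = [(G, [])]"
proof (induction G)
  case Nil then show ?case by simp
next
  case (Cons t G)
  have "filter (\<lambda>(P,R). R = []) (tc t) = [([t],[])]"
    by (simp add: tc_def filter_map o_def case_prod_beta)
  then show ?case using Cons
    by (simp add: fcuts_Cons prodc_Cons filter_prodc[where pa="\<lambda>(P,R). R = []" and pb="\<lambda>(P,R). R = []"])
qed

lemma filter_P_nil_forest:
  assumes "\<And>t. t \<in> set G \<Longrightarrow> filter (\<lambda>(P,r). P = []) (cuts t) = [([], t)]"
  shows "filter (\<lambda>(P,R). P = []) (fcuts G) = [([], G)]"
  using assms
proof (induction G)
  case Nil then show ?case by simp
next
  case (Cons t G)
  have "filter (\<lambda>(P,R). P = []) (tc t) = [([],[t])]"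
    using Cons.prems[of t] by (simp add: tc_def filter_map o_def case_prod_beta)
  then show ?case using Cons
    by (simp add: fcuts_Cons prodc_Cons filter_prodc[where pa="\<lambda>(P,R). P = []" and pb="\<lambda>(P,R). P = []"])
qed

lemma filter_P_nil_tree: "filter (\<lambda>(P,r). P = []) (cuts t) = [([], t)]"
proof (induction t)
  case (Node d K)
  have "filter (\<lambda>(P,R). P = []) (fcuts K) = [([], K)]"
    by (rule filter_P_nil_forest) (use Node in auto)
  then have "filter (\<lambda>x. fst x = []) (fcuts K) = [([], K)]" by (simp add: case_prod_unfold)
  then show ?case by (simp add: cuts_Node filter_map o_def case_prod_beta)
qed

lemma filter_P_nil: "filter (\<lambda>(P,R). P = []) (fcuts G) = [([], G)]"
  by (rule filter_P_nil_forest) (rule filter_P_nil_tree)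

lemma sum_P_nil:
  "sum_list (map (\<lambda>(P,R). (if P = [] then f R else 0)) (fcuts G)) = (f G :: 'a::comm_monoid_add)"
proof -
  have e: "(\<lambda>(P,R). if P = [] then f R else 0) = (\<lambda>x. if (\<lambda>(P,R). P = []) x then (\<lambda>(P,R). f R) x else 0)"
    by (auto simp: fun_eq_iff)
  show ?thesis by (simp only: e sum_list_map_filter'[symmetric] filter_P_nil) simp
qed

lemma sum_R_nil:
  "sum_list (map (\<lambda>(P,R). (if R = [] then f P else 0)) (fcuts G)) = (f G :: 'a::comm_monoid_add)"
proof -
  have e: "(\<lambda>(P,R). if R = [] then f P else 0) = (\<lambda>x. if (\<lambda>(P,R). R = []) x then (\<lambda>(P,R). f P) x else 0)"
    by (auto simp: fun_eq_iff)
  show ?thesis by (simp only: e sum_list_map_filter'[symmetric] filter_R_nil) simp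
qed

lemma mem_P_nil: "([], R) \<in> set (fcuts G) \<Longrightarrow> R = G"
proof -
  assume "([], R) \<in> set (fcuts G)"
  then have "([], R) \<in> set (filter (\<lambda>(P,R). P = []) (fcuts G))" by simp
  then show ?thesis by (simp add: filter_P_nil)
qed

lemma mem_R_nil: "(P, []) \<in> set (fcuts G) \<Longrightarrow> P = G"
proof -
  assume "(P, []) \<in> set (fcuts G)"
  then have "(P, []) \<in> set (filter (\<lambda>(P,R). R = []) (fcuts G))" by simp
  then show ?thesis by (simp add: filter_R_nil)
qed

lemma empty_cut_mem: "([], G) \<in> set (fcuts G)"
proof -
  have "([], G) \<in> set (filter (\<lambda>(P,R). P = []) (fcuts G))" by (simp add: filter_P_nil)
  then show ?thesis by simp
qed

lemma total_cut_mem: "(G, []) \<in> set (fcuts G)"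
proof -
  have "(G, []) \<in> set (filter (\<lambda>(P,R). R = []) (fcuts G))" by (simp add: filter_R_nil)
  then show ?thesis by simp
qed

definition fdec :: "'d forest \<Rightarrow> 'd set" where
  "fdec F = \<Union> (set_ptree ` set F)"

lemma fdec_simps[simp]: "fdec [] = {}" "fdec (t # F) = set_ptree t \<union> fdec F"
  "fdec (A @ B) = fdec A \<union> fdec B"
  by (auto simp: fdec_def)

lemma set_ptree_Node: "set_ptree (Node d K) = insert d (fdec K)"
  by (auto simp: fdec_def)

lemma fweight_simps[simp]: "fweight [] = 0" "fweight (t # F) = tweight t + fweight F"
  "fweight (A @ B) = fweight A + fweight B"
  by (auto simp: fweight_def)

lemma tweight_Node: "tweight (Node d K) = Suc (fweight K)"
  by (simp add: fweight_def)

lemma forest_on_fdec: "forest_on D F \<longleftrightarrow> fdec F \<subseteq> D"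
  by (auto simp: forest_on_def fdec_def)

lemma cut_props_forest:
  assumes "\<And>t P r. t \<in> set G \<Longrightarrow> (P, r) \<in> set (cuts t) \<Longrightarrow>
             tweight t = fweight P + tweight r \<and> set_ptree t = fdec P \<union> set_ptree r"
  shows "(P, R) \<in> set (fcuts G) \<Longrightarrow> fweight G = fweight P + fweight R \<and> fdec G = fdec P \<union> fdec R"
  using assms
proof (induction G arbitrary: P R)
  case Nil then show ?case by simp
next
  case (Cons t G)
  from Cons.prems(1) obtain P1 R1 P2 R2 where h: "(P1,R1) \<in> set (tc t)" "(P2,R2) \<in> set (fcuts G)"
    "P = P1 @ P2" "R = R1 @ R2"
    by (auto simp: fcuts_Cons mem_prodc)
  have ih: "fweight G = fweight P2 + fweight R2 \<and> fdec G = fdec P2 \<union> fdec R2"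
    using Cons h by auto
  have "tweight t = fweight P1 + fweight R1 \<and> set_ptree t = fdec P1 \<union> fdec R1"
    using h(1) Cons.prems(2)[of t] by (auto simp: tc_def)
  then show ?case using ih h by auto
qed

lemma cut_props_tree: "(P, r) \<in> set (cuts t) \<Longrightarrow>
             tweight t = fweight P + tweight r \<and> set_ptree t = fdec P \<union> set_ptree r"
proof (induction t arbitrary: P r)
  case (Node d K)
  from Node.prems obtain rs where h: "(P, rs) \<in> set (fcuts K)" "r = Node d rs"
    by (auto simp: cuts_Node)
  have "fweight K = fweight P + fweight rs \<and> fdec K = fdec P \<union> fdec rs"
    by (rule cut_props_forest[OF _ h(1)]) (use Node.IH in blast)
  then show ?case using h by (auto simp: fweight_def fdec_def)
qed

lemma cut_props: "(P, R) \<in> set (fcuts G) \<Longrightarrow> fweight G = fweight P + fweight R \<and> fdec G = fdec P \<union> fdec R"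
proof -
  assume a: "(P, R) \<in> set (fcuts G)"
  show ?thesis by (rule cut_props_forest[OF _ a]) (rule cut_props_tree)
qed

definition C1 :: "('d forest \<times> 'd forest) list \<Rightarrow> ('d forest \<Rightarrow> 'd forest \<Rightarrow> 'd forest \<Rightarrow> 'a::comm_monoid_add) \<Rightarrow> 'a" where
  "C1 xs \<phi> = sum_list (map (\<lambda>(P,R). sum_list (map (\<lambda>(P1,P2). \<phi> P1 P2 R) (fcuts P))) xs)"

definition C2 :: "('d forest \<times> 'd forest) list \<Rightarrow> ('d forest \<Rightarrow> 'd forest \<Rightarrow> 'd forest \<Rightarrow> 'a::comm_monoid_add) \<Rightarrow> 'a" where
  "C2 xs \<phi> = sum_list (map (\<lambda>(Q1,Q2). sum_list (map (\<lambda>(P2,R). \<phi> Q1 P2 R) (fcuts Q2))) xs)"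

lemma C1_prodc: "C1 (prodc xs ys) \<phi> = C1 xs (\<lambda>a1 a2 y1. C1 ys (\<lambda>b1 b2 y2. \<phi> (a1@b1) (a2@b2) (y1@y2)))"
proof -
  have "C1 (prodc xs ys) \<phi> = sum_list (map (\<lambda>(x1,y1). sum_list (map (\<lambda>(x2,y2).
      sum_list (map (\<lambda>(a1,a2). sum_list (map (\<lambda>(b1,b2). \<phi> (a1@b1) (a2@b2) (y1@y2)) (fcuts x2))) (fcuts x1))) ys)) xs)"
    by (simp add: C1_def sum_prodc fcuts_append case_prod_unfold)
  also have "\<dots> = sum_list (map (\<lambda>(x1,y1). sum_list (map (\<lambda>(a1,a2).
      sum_list (map (\<lambda>(x2,y2). sum_list (map (\<lambda>(b1,b2). \<phi> (a1@b1) (a2@b2) (y1@y2)) (fcuts x2))) ys)) (fcuts x1))) xs)"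
    by (rule arg_cong[where f=sum_list], rule map_cong[OF refl]) (simp add: case_prod_unfold sum_list_swap[where xs=ys])
  finally show ?thesis by (simp add: C1_def case_prod_unfold)
qed

lemma C2_prodc: "C2 (prodc xs ys) \<phi> = C2 xs (\<lambda>a1 a2 a3. C2 ys (\<lambda>b1 b2 b3. \<phi> (a1@b1) (a2@b2) (a3@b3)))"
proof -
  have "C2 (prodc xs ys) \<phi> = sum_list (map (\<lambda>(x1,y1). sum_list (map (\<lambda>(x2,y2).
      sum_list (map (\<lambda>(a2,a3). sum_list (map (\<lambda>(b2,b3). \<phi> (x1@x2) (a2@b2) (a3@b3)) (fcuts y2))) (fcuts y1))) ys)) xs)"
    by (simp add: C2_def sum_prodc fcuts_append case_prod_unfold)
  also have "\<dots> = sum_list (map (\<lambda>(x1,y1). sum_list (map (\<lambda>(a2,a3).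
      sum_list (map (\<lambda>(x2,y2). sum_list (map (\<lambda>(b2,b3). \<phi> (x1@x2) (a2@b2) (a3@b3)) (fcuts y2))) ys)) (fcuts y1))) xs)"
    by (rule arg_cong[where f=sum_list], rule map_cong[OF refl]) (simp add: case_prod_unfold sum_list_swap[where xs=ys])
  finally show ?thesis by (simp add: C2_def case_prod_unfold)
qed

lemma coassoc_forest:
  assumes "\<And>t (\<psi> :: 'd forest \<Rightarrow> 'd forest \<Rightarrow> 'd forest \<Rightarrow> 'a::comm_monoid_add). t \<in> set G \<Longrightarrow> C1 (tc t) \<psi> = C2 (tc t) \<psi>"
  shows "C1 (fcuts G) (\<phi> :: 'd forest \<Rightarrow> 'd forest \<Rightarrow> 'd forest \<Rightarrow> 'a) = C2 (fcuts G) \<phi>"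
  using assms
proof (induction G arbitrary: \<phi>)
  case Nil then show ?case by (simp add: C1_def C2_def)
next
  case (Cons t G)
  have ih: "\<And>\<psi> :: 'd forest \<Rightarrow> 'd forest \<Rightarrow> 'd forest \<Rightarrow> 'a. C1 (fcuts G) \<psi> = C2 (fcuts G) \<psi>" using Cons by auto
  show ?case
    by (simp add: fcuts_Cons C1_prodc C2_prodc ih Cons.prems)
qed

lemma coassoc_tree: "C1 (tc t) (\<phi> :: 'd forest \<Rightarrow> 'd forest \<Rightarrow> 'd forest \<Rightarrow> 'a::comm_monoid_add) = C2 (tc t) \<phi>"
proof (induction t arbitrary: \<phi>)
  case (Node d K)
  have ih: "\<And>\<psi> :: 'd forest \<Rightarrow> 'd forest \<Rightarrow> 'd forest \<Rightarrow> 'a. C1 (fcuts K) \<psi> = C2 (fcuts K) \<psi>"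
    by (rule coassoc_forest) (use Node in auto)
  have "C1 (tc (Node d K)) \<phi> = \<phi> [Node d K] [] [] + sum_list (map (\<lambda>(P,rs). \<phi> P [Node d rs] []) (fcuts K))
      + C1 (fcuts K) (\<lambda>a1 a2 rs. \<phi> a1 a2 [Node d rs])"
    by (simp add: C1_def tc_def fcuts_single o_def case_prod_unfold add.assoc)
  moreover have "C2 (tc (Node d K)) \<phi> = \<phi> [Node d K] [] [] + sum_list (map (\<lambda>(P,rs). \<phi> P [Node d rs] []) (fcuts K))
      + C2 (fcuts K) (\<lambda>a1 a2 rs. \<phi> a1 a2 [Node d rs])"
    by (simp add: C2_def tc_def fcuts_single o_def case_prod_unfold add.assoc sum_list_addf)
  ultimately show ?case by (simp add: ih)
qed

lemma coassoc: "C1 (fcuts G) \<phi> = C2 (fcuts G) \<phi>"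
  by (rule coassoc_forest) (rule coassoc_tree)

fun pr :: "'d forest \<Rightarrow> 'd forest \<Rightarrow> nat" where
  "pr [] G = (if G = [] then 1 else 0)"
| "pr (Node d K # F) G = sum_list (map (\<lambda>(P,R). (if P \<noteq> [] \<and> last P = Node d [] then pr K (butlast P) else 0) * pr F R) (fcuts G))"

definition gd :: "'d \<Rightarrow> 'd forest \<Rightarrow> 'd forest \<Rightarrow> nat" where
  "gd d K P = (if P \<noteq> [] \<and> last P = Node d [] then pr K (butlast P) else 0)"

lemma pr_Cons: "pr (Node d K # F) G = sum_list (map (\<lambda>(P,R). gd d K P * pr F R) (fcuts G))"
  by (simp add: gd_def)

declare pr.simps(2)[simp del]

lemma pr_single: "pr [Node d K] G = gd d K G"
proof -
  have "pr [Node d K] G = sum_list (map (\<lambda>(P,R). gd d K P * pr [] R) (fcuts G))"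
    by (simp add: pr_Cons)
  also have "\<dots> = sum_list (map (\<lambda>(P,R). (if R = [] then gd d K P else 0)) (fcuts G))"
    by (rule arg_cong[where f=sum_list], rule map_cong) auto
  finally have "pr [Node d K] G = sum_list (map (\<lambda>(P,R). (if R = [] then gd d K P else 0)) (fcuts G))" .
  then show ?thesis by (simp add: sum_R_nil)
qed

lemma pr_append: "pr (F1 @ F2) G = sum_list (map (\<lambda>(P,R). pr F1 P * pr F2 R) (fcuts G))"
proof (induction F1 arbitrary: G)
  case Nil
  have "sum_list (map (\<lambda>(P,R). pr [] P * pr F2 R) (fcuts G)) = sum_list (map (\<lambda>(P,R). (if P = [] then pr F2 R else 0)) (fcuts G))"
    by (rule arg_cong[where f=sum_list], rule map_cong) auto
  then show ?case by (simp add: sum_P_nil)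
next
  case (Cons t F1)
  obtain d K where t: "t = Node d K" by (cases t)
  define \<phi> where "\<phi> = (\<lambda>a b c. gd d K a * pr F1 b * pr F2 c)"
  have "pr (t # F1 @ F2) G = sum_list (map (\<lambda>(P,R). gd d K P * sum_list (map (\<lambda>(R1,R2). pr F1 R1 * pr F2 R2) (fcuts R))) (fcuts G))"
    by (simp add: t pr_Cons Cons.IH)
  also have "\<dots> = C2 (fcuts G) \<phi>"
    by (simp add: C2_def \<phi>_def case_prod_unfold sum_list_const_mult mult.assoc)
  also have "\<dots> = C1 (fcuts G) \<phi>" by (simp add: coassoc)
  also have "\<dots> = sum_list (map (\<lambda>(P,R). pr (t # F1) P * pr F2 R) (fcuts G))"
    by (simp add: C1_def \<phi>_def case_prod_unfold sum_list_mult_const t pr_Cons)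
  finally show ?case by simp
qed

lemma sum4_swap: "sum_list (map (\<lambda>a. sum_list (map (\<lambda>b. sum_list (map (\<lambda>c. sum_list (map (\<lambda>d. f a b c d) ws)) zs)) ys)) xs)
  = (sum_list (map (\<lambda>c. sum_list (map (\<lambda>d. sum_list (map (\<lambda>a. sum_list (map (\<lambda>b. f a b c d) ys)) xs)) ws)) zs) :: 'a::comm_monoid_add)"
proof -
  have "\<And>a. sum_list (map (\<lambda>b. sum_list (map (\<lambda>c. sum_list (map (\<lambda>d. f a b c d) ws)) zs)) ys)
     = sum_list (map (\<lambda>c. sum_list (map (\<lambda>d. sum_list (map (\<lambda>b. f a b c d) ys)) ws)) zs)"
  proof -
    fix a
    have "sum_list (map (\<lambda>b. sum_list (map (\<lambda>c. sum_list (map (\<lambda>d. f a b c d) ws)) zs)) ys)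
       = sum_list (map (\<lambda>c. sum_list (map (\<lambda>b. sum_list (map (\<lambda>d. f a b c d) ws)) ys)) zs)"
      by (rule sum_list_swap)
    also have "\<dots> = sum_list (map (\<lambda>c. sum_list (map (\<lambda>d. sum_list (map (\<lambda>b. f a b c d) ys)) ws)) zs)"
      by (rule arg_cong[where f=sum_list], rule map_cong[OF refl], rule sum_list_swap)
    finally show "?thesis a" .
  qed
  then have "sum_list (map (\<lambda>a. sum_list (map (\<lambda>b. sum_list (map (\<lambda>c. sum_list (map (\<lambda>d. f a b c d) ws)) zs)) ys)) xs)
     = sum_list (map (\<lambda>a. sum_list (map (\<lambda>c. sum_list (map (\<lambda>d. sum_list (map (\<lambda>b. f a b c d) ys)) ws)) zs)) xs)"
    by simp
  also have "\<dots> = sum_list (map (\<lambda>c. sum_list (map (\<lambda>a. sum_list (map (\<lambda>d. sum_list (map (\<lambda>b. f a b c d) ys)) ws)) xs)) zs)"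
    by (rule sum_list_swap)
  also have "\<dots> = sum_list (map (\<lambda>c. sum_list (map (\<lambda>d. sum_list (map (\<lambda>a. sum_list (map (\<lambda>b. f a b c d) ys)) xs)) ws)) zs)"
    by (rule arg_cong[where f=sum_list], rule map_cong[OF refl], rule sum_list_swap)
  finally show ?thesis .
qed

lemma sum_list_prod: "sum_list (map f xs) * sum_list (map g ys) = (sum_list (map (\<lambda>c. sum_list (map (\<lambda>d. f c * g d) ys)) xs) :: 'a::semiring_0)"
proof -
  have "sum_list (map f xs) * sum_list (map g ys) = sum_list (map (\<lambda>c. f c * sum_list (map g ys)) xs)"
    by (rule sum_list_mult_const[symmetric])
  also have "\<dots> = sum_list (map (\<lambda>c. sum_list (map (\<lambda>d. f c * g d) ys)) xs)"
    by (rule arg_cong[where f=sum_list], rule map_cong[OF refl], rule sum_list_const_mult[symmetric])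
  finally show ?thesis .
qed

lemma fcuts_Cons': "fcuts (t # F) = prodc (fcuts [t]) (fcuts F)"
  by (metis append_Cons append_Nil fcuts_append)

lemma pr_coprod_forest:
  assumes "\<And>t A B. t \<in> set F \<Longrightarrow> pr [t] (A @ B) = sum_list (map (\<lambda>(P,R). pr P A * pr R B) (fcuts [t]))"
  shows "pr F (A @ B) = sum_list (map (\<lambda>(P,R). pr P A * pr R B) (fcuts F))"
  using assms
proof (induction F arbitrary: A B)
  case Nil then show ?case by simp
next
  case (Cons t F)
  have ihF: "\<And>A B. pr F (A @ B) = sum_list (map (\<lambda>(P,R). pr P A * pr R B) (fcuts F))" using Cons by auto
  have iht: "\<And>A B. pr [t] (A @ B) = sum_list (map (\<lambda>(P,R). pr P A * pr R B) (fcuts [t]))" using Cons by auto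
  let ?f = "\<lambda>a b c d. pr (fst c) (fst a) * pr (snd c) (fst b) * (pr (fst d) (snd a) * pr (snd d) (snd b))"
  have "pr (t # F) (A @ B) = pr ([t] @ F) (A @ B)" by simp
  also have "\<dots> = sum_list (map (\<lambda>a. sum_list (map (\<lambda>b. pr [t] (fst a @ fst b) * pr F (snd a @ snd b)) (fcuts B))) (fcuts A))"
    by (simp only: pr_append fcuts_append sum_prodc) (simp add: case_prod_unfold)
  also have "\<dots> = sum_list (map (\<lambda>a. sum_list (map (\<lambda>b. sum_list (map (\<lambda>c. sum_list (map (\<lambda>d. ?f a b c d) (fcuts F))) (fcuts [t]))) (fcuts B))) (fcuts A))"
    by (simp only: iht ihF sum_list_prod) (simp add: case_prod_unfold mult_ac)
  also have "\<dots> = sum_list (map (\<lambda>c. sum_list (map (\<lambda>d. sum_list (map (\<lambda>a. sum_list (map (\<lambda>b. ?f a b c d) (fcuts B))) (fcuts A))) (fcuts F))) (fcuts [t]))"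
    by (rule sum4_swap)
  also have "\<dots> = sum_list (map (\<lambda>(P,R). pr P A * pr R B) (fcuts (t # F)))"
    by (simp only: pr_append fcuts_Cons'[of t F] sum_prodc sum_list_prod) (simp add: case_prod_unfold mult_ac pr_append sum_list_prod)
  finally show ?case .
qed

lemma gd_append: "gd d K (A @ B) = (if B = [] then gd d K A else if last B = Node d [] then pr K (A @ butlast B) else 0)"
  by (simp add: gd_def butlast_append)

lemma pr_coprod_tree: "pr [t] (A @ B) = sum_list (map (\<lambda>(P,R). pr P A * pr R B) (fcuts [t]))"
proof (induction t arbitrary: A B)
  case (Node d K)
  have ihK: "\<And>A B. pr K (A @ B) = sum_list (map (\<lambda>(P,R). pr P A * pr R B) (fcuts K))"
    by (rule pr_coprod_forest) (use Node in auto)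
  have rhs: "sum_list (map (\<lambda>(P,R). pr P A * pr R B) (fcuts [Node d K]))
     = gd d K A * pr [] B + sum_list (map (\<lambda>(P,rs). pr P A * gd d rs B) (fcuts K))"
    by (simp add: fcuts_single tc_def o_def case_prod_unfold pr_single)
  show ?case
  proof (cases "B = []")
    case True
    then show ?thesis using rhs by (simp add: pr_single gd_def)
  next
    case False
    have "sum_list (map (\<lambda>(P,rs). pr P A * gd d rs B) (fcuts K)) =
       (if last B = Node d [] then sum_list (map (\<lambda>(P,rs). pr P A * pr rs (butlast B)) (fcuts K)) else 0)"
      using False by (simp add: gd_def)
    then show ?thesis using rhs False by (simp add: pr_single gd_append ihK)
  qed
qed

lemma pr_coprod: "pr F (A @ B) = sum_list (map (\<lambda>(P,R). pr P A * pr R B) (fcuts F))"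
  by (rule pr_coprod_forest) (rule pr_coprod_tree)

lemma pr_Nil_right: "pr F [] = (if F = [] then 1 else 0)"
proof (cases F)
  case (Cons t F')
  then show ?thesis by (cases t) (simp add: pr_Cons gd_def)
qed simp

declare tweight.simps[simp del] tweight_Node[simp] ptree.set[simp del] set_ptree_Node[simp]

lemma fweight_pos: "t \<in> set F \<Longrightarrow> tweight t \<le> fweight F"
  by (induction F) auto

lemma tweight_pos: "0 < tweight t"
  by (cases t) auto

lemma sum_nat_ne0: "sum_list (map f xs) \<noteq> (0::nat) \<Longrightarrow> \<exists>x\<in>set xs. f x \<noteq> 0"
  by auto

lemma pr_support: "pr F G \<noteq> 0 \<Longrightarrow> fweight G = fweight F \<and> fdec G \<subseteq> fdec F"
proof (induction "fweight F" arbitrary: F G rule: less_induct)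
  case less
  show ?case
  proof (cases F)
    case Nil
    then show ?thesis using less.prems by (simp split: if_splits)
  next
    case (Cons t F')
    obtain d K where t: "t = Node d K" by (cases t)
    from less.prems obtain P R where PR: "(P,R) \<in> set (fcuts G)" "gd d K P \<noteq> 0" "pr F' R \<noteq> 0"
      unfolding Cons t pr_Cons by (auto dest!: sum_nat_ne0)
    from PR(2) have P0: "P \<noteq> []" "last P = Node d []" "pr K (butlast P) \<noteq> 0"
      by (auto simp: gd_def split: if_splits)
    then have P: "P = butlast P @ [Node d []]" "pr K (butlast P) \<noteq> 0"
      by (metis append_butlast_last_id)+
    have "fweight (butlast P) = fweight K \<and> fdec (butlast P) \<subseteq> fdec K"
      by (rule less.hyps[OF _ P(2)]) (simp add: Cons t)
    moreover have "fweight R = fweight F' \<and> fdec R \<subseteq> fdec F'"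
      by (rule less.hyps[OF _ PR(3)]) (simp add: Cons t tweight_pos)
    moreover have "fweight P = fweight (butlast P) + 1" "fdec P = fdec (butlast P) \<union> {d}"
      using arg_cong[OF P(1), of fweight] arg_cong[OF P(1), of fdec]
      by (simp_all add: tweight_Node set_ptree_Node)
    ultimately show ?thesis using cut_props[OF PR(1)]
      by (auto simp: Cons t fdec_def)
  qed
qed

function iota :: "'d forest \<Rightarrow> 'd forest" where
  "iota F = (if F = [] then [] else (case last F of Node d K \<Rightarrow> iota K @ [Node d (iota (butlast F))]))"
  by pat_completeness auto
termination
proof (relation "measure fweight")
  fix F :: "'d forest" and d K
  assume "\<not> F = []" "last F = Node d K"
  then have e: "F = butlast F @ [Node d K]" by (metis append_butlast_last_id)
  have "fweight F = fweight (butlast F) + Suc (fweight K)"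
    by (subst e) simp
  then show "(K, F) \<in> measure fweight" "(butlast F, F) \<in> measure fweight" by auto
qed simp

declare iota.simps[simp del]

lemma iota_Nil[simp]: "iota [] = []"
  by (subst iota.simps) simp

lemma iota_snoc[simp]: "iota (F @ [Node d K]) = iota K @ [Node d (iota F)]"
  by (subst iota.simps) simp

lemma iota_props: "fweight (iota F) = fweight F \<and> fdec (iota F) = fdec F \<and> iota (iota F) = F"
proof (induction "fweight F" arbitrary: F rule: less_induct)
  case less
  show ?case
  proof (cases F rule: rev_cases)
    case Nil then show ?thesis by simp
  next
    case (snoc F' t)
    obtain d K where t: "t = Node d K" by (cases t)
    have a: "fweight (iota K) = fweight K \<and> fdec (iota K) = fdec K \<and> iota (iota K) = K"
      by (rule less) (simp add: snoc t)
    have b: "fweight (iota F') = fweight F' \<and> fdec (iota F') = fdec F' \<and> iota (iota F') = F'"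
      by (rule less) (simp add: snoc t)
    show ?thesis using a b by (auto simp: snoc t set_ptree_Node)
  qed
qed

lemma iota_iota[simp]: "iota (iota F) = F"
  using iota_props[of F] by (elim conjE)

lemma fweight_iota[simp]: "fweight (iota F) = fweight F"
  using iota_props[of F] by (elim conjE)

lemma fdec_iota[simp]: "fdec (iota F) = fdec F"
  using iota_props[of F] by (elim conjE)

function rlt :: "'d forest \<Rightarrow> 'd forest \<Rightarrow> bool" where
  "rlt [] [] = False"
| "rlt [] (t # G) = True"
| "rlt (t # F) [] = False"
| "rlt (Node d K # F) (Node e L # G) = (rlt (rev K) (rev L) \<or> (K = L \<and> rlt F G))"
  by pat_completeness auto
termination
  by (relation "measure (\<lambda>(x,y). fweight x)") (auto simp: fweight_def simp flip: rev_map)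

lemma rlt_irrefl0: "x = y \<Longrightarrow> \<not> rlt x y"
  by (induction x y rule: rlt.induct) auto

lemma rlt_irrefl: "\<not> rlt x x"
  by (simp add: rlt_irrefl0)

lemma rlt_trans: "rlt x y \<Longrightarrow> rlt y z \<Longrightarrow> rlt x (z :: 'd forest)"
proof (induction x y arbitrary: z rule: rlt.induct)
  case (2 t G)
  then show ?case by (cases z) auto
next
  case (4 d K F e L G)
  from 4(4) obtain t' H where z: "z = t' # H" by (cases z) auto
  obtain f M where t': "t' = Node f M" by (cases t')
  show ?case using 4 unfolding z t' by auto
qed auto

lemma rlt_prefix: "ys \<noteq> [] \<Longrightarrow> rlt xs (xs @ ys)"
proof (induction xs)
  case Nil then show ?case by (cases ys) auto
next
  case (Cons t xs)
  then show ?case by (cases t) (simp add: rlt_irrefl)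
qed

definition ch :: "'d ptree \<Rightarrow> 'd forest" where "ch t = (case t of Node e Y \<Rightarrow> Y)"

lemma rlt_sub0: "rlt (rev (ch t)) (t # rest)"
proof (induction t arbitrary: rest)
  case (Node e Y)
  show ?case
  proof (cases Y rule: rev_cases)
    case Nil then show ?thesis by (simp add: ch_def)
  next
    case (snoc Y0 y)
    obtain e' Y' where y: "y = Node e' Y'" by (cases y)
    have "rlt (rev Y') (Node e' Y' # rev Y0)"
      using Node.IH[of y "rev Y0"] snoc y by (simp add: ch_def)
    then show ?thesis using snoc y by (simp add: ch_def)
  qed
qed

lemma rlt_sub: "rlt (rev Y) (Node e Y # rest)"
  using rlt_sub0[of "Node e Y" rest] by (simp add: ch_def)

definition flt :: "'d forest \<Rightarrow> 'd forest \<Rightarrow> bool" where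
  "flt F G = rlt (rev F) (rev G)"

lemma flt_irrefl: "\<not> flt x x"
  by (simp add: flt_def rlt_irrefl)

lemma flt_trans: "flt x y \<Longrightarrow> flt y z \<Longrightarrow> flt x z"
  unfolding flt_def by (rule rlt_trans)

lemma flt_suffix: "P0 \<noteq> [] \<Longrightarrow> flt X (P0 @ X)"
  by (simp add: flt_def rlt_prefix)

lemma flt_sub: "flt Y (P0 @ [Node e Y])"
  by (simp add: flt_def rlt_sub)

lemma flt_last1: "flt Y Z \<Longrightarrow> flt (G0 @ [Node e Y]) (H0 @ [Node d Z])"
  by (simp add: flt_def)

lemma flt_last2: "flt G0 H0 \<Longrightarrow> flt (G0 @ [Node d Y]) (H0 @ [Node e Y])"
  by (simp add: flt_def)

lemma tc_Node: "tc (Node e Y) = ([Node e Y], []) # map (\<lambda>(P, rs). (P, [Node e rs])) (fcuts Y)"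
  by (simp add: tc_def o_def case_prod_unfold)

lemma fcuts_snoc: "fcuts (G0 @ [g]) = prodc (fcuts G0) (tc g)"
  by (simp add: fcuts_append fcuts_single)

lemma tri: "(pr F G \<noteq> 0 \<longrightarrow> G = iota F \<or> flt G (iota F)) \<and> pr F (iota F) \<noteq> 0"
proof (induction "fweight F" arbitrary: F G rule: less_induct)
  case less
  show ?case
  proof (cases F rule: rev_cases)
    case Nil then show ?thesis by simp
  next
    case (snoc F' t)
    obtain d K where t: "t = Node d K" by (cases t)
    have ihF: "\<And>G. (pr F' G \<noteq> 0 \<longrightarrow> G = iota F' \<or> flt G (iota F')) \<and> pr F' (iota F') \<noteq> 0"
      by (rule less) (simp add: snoc t)
    have ihK: "\<And>G. (pr K G \<noteq> 0 \<longrightarrow> G = iota K \<or> flt G (iota K)) \<and> pr K (iota K) \<noteq> 0"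
      by (rule less) (simp add: snoc t)
    have prF: "pr F G = sum_list (map (\<lambda>(P,R). pr F' P * gd d K R) (fcuts G))" for G
      by (simp add: snoc t pr_append pr_single)
    have iF: "iota F = iota K @ [Node d (iota F')]" by (simp add: snoc t)
    have part1: "G = iota F \<or> flt G (iota F)" if nz: "pr F G \<noteq> 0"
    proof -
      from nz obtain P R where PR: "(P,R) \<in> set (fcuts G)" "pr F' P \<noteq> 0" "gd d K R \<noteq> 0"
        unfolding prF by (auto dest!: sum_nat_ne0)
      from PR(3) have R0: "R \<noteq> []" "last R = Node d []" "pr K (butlast R) \<noteq> 0"
        by (auto simp: gd_def split: if_splits)
      define R' where "R' = butlast R"
      have R: "R = R' @ [Node d []]" using R0 unfolding R'_def by (metis append_butlast_last_id)
      have hP: "P = iota F' \<or> flt P (iota F')" using ihF PR(2) by blast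
      have hR: "R' = iota K \<or> flt R' (iota K)" using ihK R0(3) unfolding R'_def by blast
      have "G \<noteq> []" using PR(1) R by (auto simp: fcuts.simps(1))
      then obtain G0 g where G: "G = G0 @ [g]" by (cases G rule: rev_cases) auto
      obtain e Y where g: "g = Node e Y" by (cases g)
      from PR(1) obtain P0 R0 Pg Rg where c: "(P0,R0) \<in> set (fcuts G0)" "(Pg,Rg) \<in> set (tc g)"
        "P = P0 @ Pg" "R = R0 @ Rg"
        unfolding G fcuts_snoc mem_prodc by blast
      show ?thesis
      proof (cases "Rg = []")
        case True
        then have Pg: "Pg = [g]" using c(2) by (auto simp: g tc_Node)
        have "flt Y P" unfolding c(3) Pg g by (rule flt_sub)
        then have "flt Y (iota F')" using hP flt_trans by blast
        then show ?thesis unfolding G g iF by (simp add: flt_last1)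
      next
        case False
        then obtain rs where rs: "(Pg, rs) \<in> set (fcuts Y)" "Rg = [Node e rs]"
          using c(2) by (auto simp: g tc_Node)
        from c(4) have "R0 @ [Node e rs] = R' @ [Node d []]" using R rs(2) by simp
        then have eq: "R0 = R'" "e = d" "rs = []" by auto
        have PgY: "Pg = Y" using rs(1) eq(3) mem_R_nil by blast
        show ?thesis
        proof (cases "P0 = []")
          case False
          have "flt Y P" unfolding c(3) PgY by (rule flt_suffix[OF False])
          then have "flt Y (iota F')" using hP flt_trans by blast
          then show ?thesis unfolding G g iF by (simp add: flt_last1)
        next
          case True
          have G0: "G0 = R'" using c(1) True eq(1) mem_P_nil by blast
          have PY: "P = Y" using c(3) True PgY by simp
          show ?thesis using hP hR unfolding G g iF G0 PY eq(2)
            by (auto simp: flt_last1 flt_last2)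
        qed
      qed
    qed
    have part2: "pr F (iota F) \<noteq> 0"
    proof -
      have mem: "(iota F', iota K @ [Node d []]) \<in> set (fcuts (iota F))"
      proof -
        have "([], iota K) \<in> set (fcuts (iota K))" by (rule empty_cut_mem)
        moreover have "(iota F', [Node d []]) \<in> set (tc (Node d (iota F')))"
          using total_cut_mem[of "iota F'"] by (force simp: tc_Node)
        ultimately show ?thesis unfolding iF fcuts_snoc mem_prodc by force
      qed
      have "gd d K (iota K @ [Node d []]) = pr K (iota K)" by (simp add: gd_def)
      then have pos: "pr F' (iota F') * gd d K (iota K @ [Node d []]) \<noteq> 0"
        using ihF ihK by simp
      have "pr F' (iota F') * gd d K (iota K @ [Node d []]) \<le> pr F (iota F)"
        unfolding prF
        using member_le_sum_list[OF imageI[OF mem, of "\<lambda>(P,R). pr F' P * gd d K R", unfolded set_map[symmetric]]]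
        by simp
      then show ?thesis using pos by linarith
    qed
    show ?thesis using part1 part2 by blast
  qed
qed

definition psi0 :: "'d hvec \<Rightarrow> 'd hvec" where
  "psi0 x = (\<lambda>G. \<Sum>F | x F \<noteq> 0. x F * of_nat (pr F G))"

lemma sum_nz: "sum f A \<noteq> 0 \<Longrightarrow> \<exists>a\<in>A. f a \<noteq> 0"
proof (rule ccontr)
  assume a: "sum f A \<noteq> 0" "\<not> (\<exists>a\<in>A. f a \<noteq> 0)"
  then have "\<forall>a\<in>A. f a = 0" by simp
  then have "sum f A = 0" by (rule sum.neutral)
  then show False using a(1) by simp
qed

lemma Hc_finite: "x \<in> Hc D \<Longrightarrow> finite {F. x F \<noteq> 0}"
  by (simp add: Hc_def)

lemma psi0_eq: "finite S \<Longrightarrow> {F. x F \<noteq> 0} \<subseteq> S \<Longrightarrow> psi0 x G = (\<Sum>F\<in>S. x F * of_nat (pr F G))"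
  unfolding psi0_def by (rule sum.mono_neutral_left) auto

lemma basis_supp: "{G. basis F G \<noteq> 0} = {F}"
  by (auto simp: basis_def)

lemma psi0_basis: "psi0 (basis F) = (\<lambda>G. of_nat (pr F G))"
  by (rule ext) (simp add: psi0_def basis_supp basis_def)

lemma basis_Hc: "forest_on D F \<Longrightarrow> basis F \<in> Hc D"
  by (auto simp: Hc_def basis_supp basis_def)

lemma psi0_lin:
  assumes "finite I" "\<And>i. i \<in> I \<Longrightarrow> finite {F. y i F \<noteq> 0}"
  shows "psi0 (\<lambda>H. \<Sum>i\<in>I. c i * y i H) G = (\<Sum>i\<in>I. c i * psi0 (y i) G)"
proof -
  define S where "S = (\<Union>i\<in>I. {F. y i F \<noteq> 0})"
  have fS: "finite S" using assms by (simp add: S_def)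
  have sub: "{F. (\<Sum>i\<in>I. c i * y i F) \<noteq> 0} \<subseteq> S"
    by (auto simp: S_def dest!: sum_nz)
  have "psi0 (\<lambda>H. \<Sum>i\<in>I. c i * y i H) G = (\<Sum>F\<in>S. (\<Sum>i\<in>I. c i * y i F) * of_nat (pr F G))"
    by (rule psi0_eq[OF fS sub])
  also have "\<dots> = (\<Sum>i\<in>I. c i * (\<Sum>F\<in>S. y i F * of_nat (pr F G)))"
    by (simp add: sum_distrib_left sum_distrib_right sum.swap[of _ S] mult.assoc)
  also have "\<dots> = (\<Sum>i\<in>I. c i * psi0 (y i) G)"
    by (rule sum.cong[OF refl]) (subst psi0_eq[OF fS], auto simp: S_def)
  finally show ?thesis .
qed

lemma Hc_lin:
  assumes "finite I" "\<And>i. i \<in> I \<Longrightarrow> y i \<in> Hc D"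
  shows "(\<lambda>H. \<Sum>i\<in>I. c i * y i H) \<in> Hc D"
proof -
  have "{F. (\<Sum>i\<in>I. c i * y i F) \<noteq> 0} \<subseteq> (\<Union>i\<in>I. {F. y i F \<noteq> 0})"
    by (auto dest!: sum_nz)
  moreover have "finite (\<Union>i\<in>I. {F. y i F \<noteq> 0})" using assms by (auto simp: Hc_def)
  ultimately have "finite {F. (\<Sum>i\<in>I. c i * y i F) \<noteq> 0}" by (rule finite_subset)
  then show ?thesis using assms unfolding Hc_def
    by (auto dest!: sum_nz)
qed

lemma psi0_add: "x \<in> Hc D \<Longrightarrow> y \<in> Hc D \<Longrightarrow> psi0 (\<lambda>F. x F + y F) = (\<lambda>F. psi0 x F + psi0 y F)"
proof (rule ext)
  fix G
  assume x: "x \<in> Hc D" and y: "y \<in> Hc D"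
  define S where "S = {F. x F \<noteq> 0} \<union> {F. y F \<noteq> 0}"
  have fS: "finite S" using x y by (simp add: S_def Hc_def)
  show "psi0 (\<lambda>F. x F + y F) G = psi0 x G + psi0 y G"
    by (subst (1 2 3) psi0_eq[OF fS]) (auto simp: S_def distrib_right sum.distrib)
qed

lemma psi0_scale: "x \<in> Hc D \<Longrightarrow> psi0 (\<lambda>F. c * x F) = (\<lambda>F. c * psi0 x F)"
proof (rule ext)
  fix G
  assume x: "x \<in> Hc D"
  define S where "S = {F. x F \<noteq> 0}"
  have fS: "finite S" using x by (simp add: S_def Hc_def)
  show "psi0 (\<lambda>F. c * x F) G = c * psi0 x G"
    by (subst (1 2) psi0_eq[OF fS]) (auto simp: S_def sum_distrib_left mult.assoc)
qed

lemma psi0_nz: "psi0 x G \<noteq> 0 \<Longrightarrow> \<exists>F. x F \<noteq> 0 \<and> pr F G \<noteq> 0"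
  unfolding psi0_def by (auto dest!: sum_nz)

lemma psi0_Dc: "x \<in> Hc D \<Longrightarrow> psi0 x \<in> Dc D"
proof -
  assume x: "x \<in> Hc D"
  define S where "S = {F. x F \<noteq> 0}"
  have fS: "finite S" using x by (simp add: S_def Hc_def)
  have "\<forall>G. psi0 x G \<noteq> 0 \<longrightarrow> forest_on D G \<and> fweight G \<le> Max (fweight ` S)"
  proof (intro allI impI)
    fix G assume "psi0 x G \<noteq> 0"
    then obtain F where F: "x F \<noteq> 0" "pr F G \<noteq> 0" using psi0_nz by blast
    have "forest_on D F" using x F(1) by (simp add: Hc_def)
    moreover have "fweight G = fweight F \<and> fdec G \<subseteq> fdec F" using pr_support[OF F(2)] .
    moreover have "fweight F \<le> Max (fweight ` S)" using fS F(1) by (auto simp: S_def)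
    ultimately show "forest_on D G \<and> fweight G \<le> Max (fweight ` S)"
      by (auto simp: forest_on_fdec)
  qed
  then show ?thesis unfolding Dc_def by blast
qed

lemma sum_list_sum_swap: "sum_list (map (\<lambda>q. \<Sum>i\<in>I. f i q) xs) = (\<Sum>i\<in>I. sum_list (map (f i) xs))"
  by (induction xs) (auto simp: sum.distrib)

lemma of_nat_sum_list_map: "of_nat (sum_list (map g xs)) = sum_list (map (\<lambda>q. of_nat (g q)) xs)"
  by (induction xs) auto

lemma hmult_repr:
  assumes fx: "finite {F. x F \<noteq> 0}" and fy: "finite {F. y F \<noteq> 0}"
  shows "hmult x y H = (\<Sum>p\<in>{p\<in>{F. x F \<noteq> 0} \<times> {F. y F \<noteq> 0}. fst p @ snd p = H}. x (fst p) * y (snd p))"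
proof -
  let ?Sx = "{F. x F \<noteq> 0}" and ?Sy = "{F. y F \<noteq> 0}"
  define J where "J = {i\<in>{..length H}. take i H \<in> ?Sx \<and> drop i H \<in> ?Sy}"
  define h where "h = (\<lambda>i. (take i H, drop i H))"
  have "hmult x y H = (\<Sum>i\<in>{..length H}. x (take i H) * y (drop i H))" by (simp add: hmult_def)
  also have "\<dots> = (\<Sum>i\<in>J. x (take i H) * y (drop i H))"
    by (rule sum.mono_neutral_right) (auto simp: J_def)
  also have "\<dots> = (\<Sum>p\<in>h ` J. x (fst p) * y (snd p))"
  proof (rule sum.reindex_cong[symmetric])
    show "inj_on h J"
      by (rule inj_onI) (auto simp: h_def J_def, metis length_take min.absorb2)
  qed (auto simp: h_def)
  also have "h ` J = {p\<in>?Sx \<times> ?Sy. fst p @ snd p = H}"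
  proof
    show "h ` J \<subseteq> {p\<in>?Sx \<times> ?Sy. fst p @ snd p = H}" by (auto simp: h_def J_def)
  next
    show "{p\<in>?Sx \<times> ?Sy. fst p @ snd p = H} \<subseteq> h ` J"
    proof
      fix p assume p: "p \<in> {p\<in>?Sx \<times> ?Sy. fst p @ snd p = H}"
      then have "length (fst p) \<in> J" "h (length (fst p)) = p"
        by (auto simp: J_def h_def)
      then show "p \<in> h ` J" by (metis imageI)
    qed
  qed
  finally show ?thesis .
qed

lemma psi0_mult:
  assumes x: "x \<in> Hc D" and y: "y \<in> Hc D"
  shows "psi0 (hmult x y) = dmult (psi0 x) (psi0 y)"
proof (rule ext)
  fix G
  let ?Sx = "{F. x F \<noteq> 0}" and ?Sy = "{F. y F \<noteq> 0}"
  have fx: "finite ?Sx" and fy: "finite ?Sy" using x y by (auto simp: Hc_def)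
  let ?g = "\<lambda>p::'d forest \<times> 'd forest. fst p @ snd p"
  let ?h = "\<lambda>p. x (fst p) * y (snd p) * of_nat (pr (fst p @ snd p) G)"
  define S' where "S' = ?g ` (?Sx \<times> ?Sy)"
  have fS': "finite S'" using fx fy by (simp add: S'_def)
  have sub: "{H. hmult x y H \<noteq> 0} \<subseteq> S'"
  proof
    fix H assume "H \<in> {H. hmult x y H \<noteq> 0}"
    then obtain p where "p \<in> ?Sx \<times> ?Sy" "fst p @ snd p = H"
      unfolding mem_Collect_eq hmult_repr[OF fx fy] by (auto dest!: sum_nz)
    then show "H \<in> S'" unfolding S'_def by force
  qed
  have "psi0 (hmult x y) G = (\<Sum>H\<in>S'. hmult x y H * of_nat (pr H G))"
    by (rule psi0_eq[OF fS' sub])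
  also have "\<dots> = (\<Sum>H\<in>S'. \<Sum>p\<in>{p\<in>?Sx \<times> ?Sy. ?g p = H}. ?h p)"
    by (rule sum.cong[OF refl]) (auto simp: hmult_repr[OF fx fy] sum_distrib_right)
  also have "\<dots> = (\<Sum>p\<in>?Sx \<times> ?Sy. ?h p)"
    unfolding S'_def by (rule sum.image_gen[symmetric]) (simp add: fx fy)
  also have "\<dots> = dmult (psi0 x) (psi0 y) G"
  proof -
    have "dmult (psi0 x) (psi0 y) G = sum_list (map (\<lambda>q. (\<Sum>A\<in>?Sx. x A * of_nat (pr A (fst q))) * (\<Sum>B\<in>?Sy. y B * of_nat (pr B (snd q)))) (fcuts G))"
      by (simp add: dmult_def psi0_def case_prod_unfold)
    also have "\<dots> = sum_list (map (\<lambda>q. \<Sum>p\<in>?Sx \<times> ?Sy. x (fst p) * y (snd p) * (of_nat (pr (fst p) (fst q)) * of_nat (pr (snd p) (snd q)))) (fcuts G))"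
      by (simp add: sum_product sum.cartesian_product mult_ac case_prod_unfold)
    also have "\<dots> = (\<Sum>p\<in>?Sx \<times> ?Sy. sum_list (map (\<lambda>q. x (fst p) * y (snd p) * (of_nat (pr (fst p) (fst q)) * of_nat (pr (snd p) (snd q)))) (fcuts G)))"
      by (rule sum_list_sum_swap)
    also have "\<dots> = (\<Sum>p\<in>?Sx \<times> ?Sy. ?h p)"
    proof (rule sum.cong[OF refl])
      fix p
      have "(of_nat (pr (fst p @ snd p) G) :: rat) = sum_list (map (\<lambda>q. of_nat (pr (fst p) (fst q)) * of_nat (pr (snd p) (snd q))) (fcuts G))"
        by (simp add: pr_append of_nat_sum_list_map case_prod_unfold)
      then show "sum_list (map (\<lambda>q. x (fst p) * y (snd p) * (of_nat (pr (fst p) (fst q)) * of_nat (pr (snd p) (snd q)))) (fcuts G)) = ?h p"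
        by (simp add: sum_list_const_mult)
    qed
    finally show ?thesis by simp
  qed
  finally show "psi0 (hmult x y) G = dmult (psi0 x) (psi0 y) G" .
qed

lemma psi0_unit: "psi0 hunit = dunit"
  unfolding hunit_def dunit_def psi0_basis by (rule ext) (simp add: basis_def)

lemma psi0_counit: "x \<in> Hc D \<Longrightarrow> dcounit (psi0 x) = hcounit x"
proof -
  assume x: "x \<in> Hc D"
  let ?S = "insert [] {F. x F \<noteq> 0}"
  have fS: "finite ?S" using x by (simp add: Hc_def)
  have "psi0 x [] = (\<Sum>F\<in>?S. x F * of_nat (pr F []))" by (rule psi0_eq[OF fS]) auto
  also have "\<dots> = (\<Sum>F\<in>?S. if F = [] then x F else 0)"
    by (rule sum.cong[OF refl]) (simp add: pr_Nil_right)
  also have "\<dots> = x []" using fS by (simp add: sum.delta)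
  finally show ?thesis by (simp add: dcounit_def hcounit_def)
qed

lemma psi0_coprod:
  fixes D :: "'d set"
  assumes x: "x \<in> Hc D"
  shows "dcoprod (psi0 x) = tensmap psi0 (hcoprod x)"
proof (rule ext)
  fix q :: "'d forest \<times> 'd forest"
  obtain A B where q: "q = (A, B)" by (cases q)
  let ?Sx = "{F. x F \<noteq> 0}"
  have fx: "finite ?Sx" using x by (simp add: Hc_def)
  define z where "z = hcoprod x"
  define T where "T = (\<Union>F\<in>?Sx. set (fcuts F))"
  have fT: "finite T" using fx by (simp add: T_def)
  define \<phi>' where "\<phi>' = (\<lambda>(P,R). pr P A * pr R B)"
  have zq: "z p = (\<Sum>F\<in>?Sx. x F * of_nat (count_list (fcuts F) p))" for p
    by (simp add: z_def hcoprod_def case_prod_unfold)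
  have subT: "{p. z p \<noteq> 0} \<subseteq> T"
  proof
    fix p assume "p \<in> {p. z p \<noteq> 0}"
    then obtain F where "F \<in> ?Sx" "count_list (fcuts F) p \<noteq> 0"
      unfolding mem_Collect_eq zq by (auto dest!: sum_nz)
    then show "p \<in> T" unfolding T_def by (auto simp: count_list_0_iff)
  qed
  have "tensmap psi0 (hcoprod x) q = (\<Sum>p\<in>{p. z p \<noteq> 0}. z p * of_nat (\<phi>' p))"
    unfolding q tensmap_def z_def[symmetric] psi0_basis \<phi>'_def
    by (simp add: case_prod_unfold mult.assoc)
  also have "\<dots> = (\<Sum>p\<in>T. z p * of_nat (\<phi>' p))"
    by (rule sum.mono_neutral_left[OF fT subT]) auto
  also have "\<dots> = (\<Sum>F\<in>?Sx. x F * (\<Sum>p\<in>T. of_nat (count_list (fcuts F) p) * of_nat (\<phi>' p)))"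
    unfolding zq by (simp add: sum_distrib_left sum_distrib_right sum.swap[of _ T] mult.assoc)
  also have "\<dots> = (\<Sum>F\<in>?Sx. x F * of_nat (pr F (A @ B)))"
  proof (rule sum.cong[OF refl])
    fix F assume F: "F \<in> ?Sx"
    have "set (fcuts F) \<subseteq> T" using F by (auto simp: T_def)
    then have "sum_list (map \<phi>' (fcuts F)) = (\<Sum>p\<in>T. count_list (fcuts F) p * \<phi>' p)"
      by (rule sum_list_map_eq_sum_count2[OF _ fT])
    then have "(\<Sum>p\<in>T. of_nat (count_list (fcuts F) p) * of_nat (\<phi>' p)) = (of_nat (pr F (A @ B)) :: rat)"
      by (simp add: pr_coprod \<phi>'_def flip: of_nat_mult)
    then show "x F * (\<Sum>p\<in>T. of_nat (count_list (fcuts F) p) * of_nat (\<phi>' p)) = x F * of_nat (pr F (A @ B))"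
      by simp
  qed
  also have "\<dots> = dcoprod (psi0 x) q"
    by (simp add: q dcoprod_def psi0_def)
  finally show "dcoprod (psi0 x) q = tensmap psi0 (hcoprod x) q" by simp
qed

lemma psi0_Bplus:
  assumes x: "x \<in> Hc D"
  shows "psi0 (Bplus d x) = gamma_dual d (psi0 x)"
proof (rule ext)
  fix G
  let ?Sx = "{F. x F \<noteq> 0}"
  have fx: "finite ?Sx" using x by (simp add: Hc_def)
  let ?i = "\<lambda>K. [Node d K]"
  have sub: "{H. Bplus d x H \<noteq> 0} \<subseteq> ?i ` ?Sx"
  proof
    fix H assume "H \<in> {H. Bplus d x H \<noteq> 0}"
    then show "H \<in> ?i ` ?Sx"
      by (auto simp: Bplus_def split: list.splits ptree.splits if_splits)
  qed
  have "psi0 (Bplus d x) G = (\<Sum>H\<in>?i ` ?Sx. Bplus d x H * of_nat (pr H G))"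
    by (rule psi0_eq[OF _ sub]) (simp add: fx)
  also have "\<dots> = (\<Sum>K\<in>?Sx. x K * of_nat (gd d K G))"
    by (subst sum.reindex) (auto simp: inj_on_def Bplus_def pr_single)
  also have "\<dots> = gamma_dual d (psi0 x) G"
    by (simp add: gamma_dual_def gd_def psi0_def)
  finally show "psi0 (Bplus d x) G = gamma_dual d (psi0 x) G" .
qed

lemma psi0_graded: "graded_map D psi0"
  unfolding graded_map_def
proof (intro allI ballI impI)
  fix n x G
  assume x: "x \<in> Hc D" and h: "\<forall>F. x F \<noteq> 0 \<longrightarrow> fweight F = n" and nz: "psi0 x G \<noteq> 0"
  from psi0_nz[OF nz] obtain F where "x F \<noteq> 0" "pr F G \<noteq> 0" by blast
  then show "fweight G = n" using h pr_support by metis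
qed

lemma psi0_hopf: "hopf_morph D psi0"
  unfolding hopf_morph_def
  by (auto intro: psi0_Dc psi0_add psi0_scale psi0_mult psi0_unit psi0_coprod psi0_counit)

lemma psi0_intertwines: "intertwines D psi0"
  unfolding intertwines_def by (auto intro: psi0_Bplus)

lemma length_le_fweight: "length F \<le> fweight F"
proof (induction F)
  case (Cons t F)
  then show ?case using tweight_pos[of t] by simp
qed simp

lemma finite_forests:
  assumes D: "finite D"
  shows "finite {F. forest_on D F \<and> fweight F \<le> N}"
proof (induction N)
  case 0
  have "{F. forest_on D F \<and> fweight F \<le> 0} \<subseteq> {[]}"
  proof
    fix F assume "F \<in> {F. forest_on D F \<and> fweight F \<le> 0}"
    then have "length F \<le> 0" using length_le_fweight[of F] by simp
    then show "F \<in> {[]}" by simp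
  qed
  then show ?case by (rule finite_subset) simp
next
  case (Suc N)
  let ?W = "{F. forest_on D F \<and> fweight F \<le> N}"
  let ?T = "(\<lambda>(d, K). Node d K) ` (D \<times> ?W)"
  have fT: "finite ?T" using Suc D by simp
  have "{F. forest_on D F \<and> fweight F \<le> Suc N} \<subseteq> {xs. set xs \<subseteq> ?T \<and> length xs \<le> Suc N}"
  proof
    fix F assume F: "F \<in> {F. forest_on D F \<and> fweight F \<le> Suc N}"
    have "set F \<subseteq> ?T"
    proof
      fix t assume t: "t \<in> set F"
      obtain d K where dK: "t = Node d K" by (cases t)
      have "tweight t \<le> Suc N" using fweight_pos[OF t] F by simp
      then have "fweight K \<le> N" using dK by simp
      moreover have "set_ptree t \<subseteq> D" using F t by (auto simp: forest_on_def)
      ultimately have "d \<in> D" "forest_on D K"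
        using dK by (auto simp: forest_on_fdec)
      then show "t \<in> ?T" using dK \<open>fweight K \<le> N\<close> by force
    qed
    moreover have "length F \<le> Suc N" using F length_le_fweight[of F] by simp
    ultimately show "F \<in> {xs. set xs \<subseteq> ?T \<and> length xs \<le> Suc N}" by simp
  qed
  then show ?case by (rule finite_subset) (rule finite_lists_length_le[OF fT])
qed

lemma flt_maximal: "finite A \<Longrightarrow> A \<noteq> {} \<Longrightarrow> \<exists>m\<in>A. \<forall>b\<in>A. \<not> flt m b"
proof (induction A rule: finite_induct)
  case empty then show ?case by simp
next
  case (insert a A)
  show ?case
  proof (cases "A = {}")
    case True then show ?thesis using flt_irrefl by auto
  next
    case False
    then obtain m where m: "m \<in> A" "\<forall>b\<in>A. \<not> flt m b" using insert.IH by blast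
    show ?thesis
    proof (cases "flt m a")
      case True
      have "\<forall>b\<in>insert a A. \<not> flt a b"
        using m True flt_irrefl flt_trans by blast
      then show ?thesis by blast
    next
      case False
      then show ?thesis using m by blast
    qed
  qed
qed

lemma psi0_zero:
  assumes x: "x \<in> Hc D" and z: "\<forall>G. psi0 x G = 0"
  shows "\<forall>F. x F = 0"
proof (rule ccontr)
  assume "\<not> (\<forall>F. x F = 0)"
  let ?S = "{F. x F \<noteq> 0}"
  have fS: "finite ?S" using x by (simp add: Hc_def)
  have ne: "?S \<noteq> {}" using \<open>\<not> (\<forall>F. x F = 0)\<close> by auto
  obtain m where m: "m \<in> iota ` ?S" "\<forall>b\<in>iota ` ?S. \<not> flt m b"
    using flt_maximal[of "iota ` ?S"] fS ne by auto
  obtain F0 where F0: "F0 \<in> ?S" "m = iota F0" using m(1) by blast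
  have "psi0 x m = (\<Sum>F\<in>?S. x F * of_nat (pr F m))" by (rule psi0_eq[OF fS]) simp
  also have "\<dots> = x F0 * of_nat (pr F0 m) + (\<Sum>F\<in>?S - {F0}. x F * of_nat (pr F m))"
    by (rule sum.remove[OF fS F0(1)])
  also have "(\<Sum>F\<in>?S - {F0}. x F * of_nat (pr F m)) = 0"
  proof (rule sum.neutral, rule ballI)
    fix F assume "F \<in> ?S - {F0}"
    then have F: "F \<in> ?S" "F \<noteq> F0" by auto
    have "pr F m = 0"
    proof (rule ccontr)
      assume "pr F m \<noteq> 0"
      then have "m = iota F \<or> flt m (iota F)" using tri by blast
      moreover have "m \<noteq> iota F" using F(2) F0(2) by (metis iota_iota)
      moreover have "iota F \<in> iota ` ?S" using F(1) by blast
      ultimately show False using m(2) by blast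
    qed
    then show "x F * of_nat (pr F m) = 0" by simp
  qed
  finally have "psi0 x m = x F0 * of_nat (pr F0 (iota F0))" using F0(2) by simp
  moreover have "pr F0 (iota F0) \<noteq> 0" using tri by blast
  ultimately have "psi0 x m \<noteq> 0" using F0(1) by simp
  then show False using z by blast
qed

lemma Hc_add: "x \<in> Hc D \<Longrightarrow> y \<in> Hc D \<Longrightarrow> (\<lambda>F. x F + y F) \<in> Hc D"
proof -
  assume x: "x \<in> Hc D" and y: "y \<in> Hc D"
  have "{F. x F + y F \<noteq> 0} \<subseteq> {F. x F \<noteq> 0} \<union> {F. y F \<noteq> 0}" by auto
  then have "finite {F. x F + y F \<noteq> 0}" using x y by (auto simp: Hc_def intro: finite_subset)
  moreover have "forest_on D F" if "x F + y F \<noteq> 0" for F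
  proof -
    from that have "x F \<noteq> 0 \<or> y F \<noteq> 0" by auto
    then show ?thesis using x y by (auto simp: Hc_def)
  qed
  ultimately show ?thesis by (auto simp: Hc_def)
qed

lemma Hc_scale: "x \<in> Hc D \<Longrightarrow> (\<lambda>F. c * x F) \<in> Hc D"
proof -
  assume x: "x \<in> Hc D"
  have "{F. c * x F \<noteq> 0} \<subseteq> {F. x F \<noteq> 0}" by auto
  then have "finite {F. c * x F \<noteq> 0}" using x by (auto simp: Hc_def intro: finite_subset)
  then show ?thesis using x by (auto simp: Hc_def)
qed

lemma psi0_inj: "inj_on psi0 (Hc D)"
proof (rule inj_onI)
  fix x y assume x: "x \<in> Hc D" and y: "y \<in> Hc D" and e: "psi0 x = psi0 y"
  have my: "(\<lambda>F. (-1) * y F) \<in> Hc D" by (rule Hc_scale[OF y])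
  have d: "(\<lambda>F. x F + (-1) * y F) \<in> Hc D" by (rule Hc_add[OF x my])
  have "psi0 (\<lambda>F. x F + (-1) * y F) = (\<lambda>F. psi0 x F + (-1) * psi0 y F)"
    using psi0_add[OF x my] psi0_scale[OF y, of "-1"] by simp
  then have "\<forall>G. psi0 (\<lambda>F. x F + (-1) * y F) G = 0" using e by simp
  then have "\<forall>F. x F + (-1) * y F = 0" by (rule psi0_zero[OF d])
  then show "x = y" by (auto simp: fun_eq_iff)
qed

lemma basis_in_image:
  assumes D: "finite D"
  shows "\<forall>G. forest_on D G \<and> fweight G \<le> N \<and> card {G'. (forest_on D G' \<and> fweight G' \<le> N) \<and> flt G' G} = m
           \<longrightarrow> (\<exists>x\<in>Hc D. psi0 x = basis G)"
proof (induction m rule: less_induct)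
  case (less m)
  let ?W = "{G. forest_on D G \<and> fweight G \<le> N}"
  have fW: "finite ?W" by (rule finite_forests[OF D])
  show ?case
  proof (intro allI impI)
    fix G assume G: "forest_on D G \<and> fweight G \<le> N \<and> card {G'. (forest_on D G' \<and> fweight G' \<le> N) \<and> flt G' G} = m"
    define B where "B = {G'. (forest_on D G' \<and> fweight G' \<le> N) \<and> flt G' G}"
    have fB: "finite B" by (rule finite_subset[OF _ fW]) (auto simp: B_def)
    have IH: "\<forall>G'\<in>B. \<exists>x\<in>Hc D. psi0 x = basis G'"
    proof
      fix G' assume G': "G' \<in> B"
      let ?B' = "{G''. (forest_on D G'' \<and> fweight G'' \<le> N) \<and> flt G'' G'}"
      have "?B' \<subset> B"
      proof
        show "?B' \<subseteq> B" using G' flt_trans by (auto simp: B_def)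
        show "?B' \<noteq> B" using G' flt_irrefl by (auto simp: B_def)
      qed
      then have "card ?B' < card B" using fB by (rule psubset_card_mono[rotated])
      then have "card ?B' < m" using G by (simp add: B_def)
      then show "\<exists>x\<in>Hc D. psi0 x = basis G'" using less G' by (auto simp: B_def)
    qed
    then obtain X where X: "\<And>G'. G' \<in> B \<Longrightarrow> X G' \<in> Hc D \<and> psi0 (X G') = basis G'"
      by metis
    define F where "F = iota G"
    have FG: "iota F = G" by (simp add: F_def)
    have Fon: "forest_on D F" using G by (simp add: F_def forest_on_fdec)
    define c0 :: rat where "c0 = of_nat (pr F G)"
    have c0: "c0 \<noteq> 0" using tri[of F] FG by (simp add: c0_def)
    define u where "u = (\<lambda>H. (1/c0) * basis F H)"
    define v where "v = (\<lambda>H. \<Sum>G'\<in>B. (- of_nat (pr F G') / c0) * X G' H)"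
    have u: "u \<in> Hc D" unfolding u_def by (rule Hc_scale[OF basis_Hc[OF Fon]])
    have v: "v \<in> Hc D" unfolding v_def by (rule Hc_lin[OF fB]) (use X in blast)
    have pu: "psi0 u = (\<lambda>H. (1/c0) * of_nat (pr F H))"
      unfolding u_def psi0_scale[OF basis_Hc[OF Fon]] psi0_basis ..
    have pv: "psi0 v H = (\<Sum>G'\<in>B. (- of_nat (pr F G') / c0) * basis G' H)" for H
      unfolding v_def by (subst psi0_lin[OF fB]) (use X Hc_finite in auto)
    have "psi0 (\<lambda>H. u H + v H) = basis G"
    proof (rule ext)
      fix H
      have "psi0 (\<lambda>H. u H + v H) H = (1/c0) * of_nat (pr F H) + (\<Sum>G'\<in>B. (- of_nat (pr F G') / c0) * basis G' H)"
        by (simp add: psi0_add[OF u v] pu pv)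
      also have "(\<Sum>G'\<in>B. (- of_nat (pr F G') / c0) * basis G' H) = (if H \<in> B then - of_nat (pr F H) / c0 else 0)"
        using fB by (simp add: basis_def if_distrib[of "\<lambda>t. _ * t"] sum.delta' cong: if_cong)
      finally have e: "psi0 (\<lambda>H. u H + v H) H = (1/c0) * of_nat (pr F H) + (if H \<in> B then - of_nat (pr F H) / c0 else 0)" .
      show "psi0 (\<lambda>H. u H + v H) H = basis G H"
      proof (cases "H = G")
        case True
        then have "H \<notin> B" using flt_irrefl by (auto simp: B_def)
        then show ?thesis using e True c0 by (simp add: basis_def c0_def)
      next
        case False
        show ?thesis
        proof (cases "H \<in> B")
          case True then show ?thesis using e False by (simp add: basis_def)
        next
          case notB: False
          have "pr F H = 0"
          proof (rule ccontr)
            assume nz: "pr F H \<noteq> 0"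
            then have "H = G \<or> flt H G" using tri[of F H] FG by simp
            moreover have "fweight H = fweight F \<and> fdec H \<subseteq> fdec F" by (rule pr_support[OF nz])
            ultimately have "H \<in> B" using False G Fon by (auto simp: B_def forest_on_fdec F_def)
            then show False using notB by simp
          qed
          then show ?thesis using e False notB by (simp add: basis_def)
        qed
      qed
    qed
    then show "\<exists>x\<in>Hc D. psi0 x = basis G" using Hc_add[OF u v] by blast
  qed
qed

lemma basis_in_image': "finite D \<Longrightarrow> forest_on D G \<Longrightarrow> \<exists>x\<in>Hc D. psi0 x = basis G"
  using basis_in_image[of D "fweight G"] by blast

lemma psi0_surj:
  assumes D: "finite D" and f: "f \<in> Dc D"
  shows "\<exists>x\<in>Hc D. psi0 x = f"
proof -
  from f obtain N where N: "\<forall>G. f G \<noteq> 0 \<longrightarrow> forest_on D G \<and> fweight G \<le> N"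
    by (auto simp: Dc_def)
  let ?S = "{G. f G \<noteq> 0}"
  have fS: "finite ?S"
    by (rule finite_subset[OF _ finite_forests[OF D, of N]]) (use N in auto)
  have "\<forall>G\<in>?S. \<exists>x\<in>Hc D. psi0 x = basis G" using basis_in_image'[OF D] N by blast
  then obtain Y where Y: "\<And>G. G \<in> ?S \<Longrightarrow> Y G \<in> Hc D \<and> psi0 (Y G) = basis G" by metis
  define x where "x = (\<lambda>H. \<Sum>G\<in>?S. f G * Y G H)"
  have "x \<in> Hc D" unfolding x_def by (rule Hc_lin[OF fS]) (use Y in blast)
  moreover have "psi0 x = f"
  proof (rule ext)
    fix H
    have "psi0 x H = (\<Sum>G\<in>?S. f G * basis G H)"
      unfolding x_def by (subst psi0_lin[OF fS]) (use Y Hc_finite in auto)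
    also have "\<dots> = f H"
      using fS by (simp add: basis_def if_distrib[of "\<lambda>t. _ * t"] sum.delta' cong: if_cong)
    finally show "psi0 x H = f H" .
  qed
  ultimately show ?thesis by blast
qed

lemma psi0_bij: "finite D \<Longrightarrow> bij_betw psi0 (Hc D) (Dc D)"
  unfolding bij_betw_def
  using psi0_inj psi0_Dc psi0_surj by blast

lemma hmult_basis: "hmult (basis A) (basis B) = basis (A @ B)"
proof (rule ext)
  fix H
  have f: "finite {F. basis A F \<noteq> 0}" "finite {F. basis B F \<noteq> 0}" by (simp_all add: basis_supp)
  have "hmult (basis A) (basis B) H = (\<Sum>p\<in>{p\<in>{A} \<times> {B}. fst p @ snd p = H}. basis A (fst p) * basis B (snd p))"
    using hmult_repr[OF f] by (simp add: basis_supp)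
  also have "\<dots> = basis (A @ B) H"
  proof (cases "A @ B = H")
    case True
    then have "{p\<in>{A} \<times> {B}. fst p @ snd p = H} = {(A, B)}" by auto
    then show ?thesis using True by (simp add: basis_def)
  next
    case False
    then have "{p\<in>{A} \<times> {B}. fst p @ snd p = H} = {}" by auto
    then show ?thesis using False by (simp add: basis_def)
  qed
  finally show "hmult (basis A) (basis B) H = basis (A @ B) H" .
qed

lemma Bplus_basis: "Bplus d (basis K) = basis [Node d K]"
  by (rule ext) (auto simp: Bplus_def basis_def split: list.splits ptree.splits)

lemma hunit_Hc: "hunit \<in> Hc D"
  unfolding hunit_def by (rule basis_Hc) (simp add: forest_on_def)

lemma morph_lin:
  assumes h: "hopf_morph D \<Psi>" and S: "finite S" "\<forall>F\<in>S. forest_on D F"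
  shows "\<Psi> (\<lambda>H. \<Sum>F\<in>S. c F * basis F H) = (\<lambda>G. \<Sum>F\<in>S. c F * \<Psi> (basis F) G)"
  using S
proof (induction S rule: finite_induct)
  case empty
  have scax: "\<And>x c. x \<in> Hc D \<Longrightarrow> \<Psi> (\<lambda>F. c * x F) = (\<lambda>F. c * \<Psi> x F)"
    using h unfolding hopf_morph_def by blast
  have "\<Psi> (\<lambda>F. 0 * hunit F) = (\<lambda>F. 0 * \<Psi> hunit F)"
    by (rule scax[OF hunit_Hc])
  then show ?case by simp
next
  case (insert a S)
  have a: "(\<lambda>H. c a * basis a H) \<in> Hc D" using insert by (intro Hc_scale basis_Hc) simp
  have s: "(\<lambda>H. \<Sum>F\<in>S. c F * basis F H) \<in> Hc D"
    using insert by (intro Hc_lin) (auto intro: basis_Hc)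
  have addax: "\<And>x y. x \<in> Hc D \<Longrightarrow> y \<in> Hc D \<Longrightarrow> \<Psi> (\<lambda>F. x F + y F) = (\<lambda>F. \<Psi> x F + \<Psi> y F)"
    using h unfolding hopf_morph_def by blast
  have add: "\<Psi> (\<lambda>H. c a * basis a H + (\<Sum>F\<in>S. c F * basis F H)) =
     (\<lambda>G. \<Psi> (\<lambda>H. c a * basis a H) G + \<Psi> (\<lambda>H. \<Sum>F\<in>S. c F * basis F H) G)"
    using addax[OF a s] by simp
  have sc: "\<Psi> (\<lambda>H. c a * basis a H) = (\<lambda>G. c a * \<Psi> (basis a) G)"
    using h insert unfolding hopf_morph_def by (auto intro: basis_Hc)
  show ?case using insert add sc by simp
qed

lemma morph_basis:
  assumes h: "hopf_morph D \<Psi>" and i: "intertwines D \<Psi>"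
  shows "forest_on D F \<Longrightarrow> \<Psi> (basis F) = psi0 (basis F)"
proof (induction "fweight F" arbitrary: F rule: less_induct)
  case less
  show ?case
  proof (cases F)
    case Nil
    have "\<Psi> hunit = dunit" using h by (simp add: hopf_morph_def)
    then show ?thesis using psi0_unit Nil by (metis hunit_def)
  next
    case (Cons t F')
    obtain d K where t: "t = Node d K" by (cases t)
    have on: "d \<in> D" "forest_on D K" "forest_on D F'"
      using less.prems by (auto simp: Cons t forest_on_fdec)
    have ihK: "\<Psi> (basis K) = psi0 (basis K)" by (rule less) (simp_all add: Cons t on)
    have ihF: "\<Psi> (basis F') = psi0 (basis F')" by (rule less) (simp_all add: Cons t on tweight_pos)
    have bF: "basis F = hmult (Bplus d (basis K)) (basis F')"
      by (simp add: Cons t hmult_basis Bplus_basis)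
    have hK: "basis K \<in> Hc D" "Bplus d (basis K) \<in> Hc D" "basis F' \<in> Hc D"
      using on by (auto simp: Bplus_basis intro!: basis_Hc simp: forest_on_fdec)
    have "\<Psi> (basis F) = dmult (\<Psi> (Bplus d (basis K))) (\<Psi> (basis F'))"
      using h hK unfolding bF hopf_morph_def by blast
    also have "\<dots> = dmult (gamma_dual d (\<Psi> (basis K))) (\<Psi> (basis F'))"
      using i on hK unfolding intertwines_def by simp
    also have "\<dots> = dmult (psi0 (Bplus d (basis K))) (psi0 (basis F'))"
      by (simp add: ihK ihF psi0_Bplus[OF hK(1)])
    also have "\<dots> = psi0 (basis F)"
      unfolding bF by (rule psi0_mult[OF hK(2,3), symmetric])
    finally show ?thesis .
  qed
qed

lemma Hc_repr: "x \<in> Hc D \<Longrightarrow> x = (\<lambda>H. \<Sum>F\<in>{F. x F \<noteq> 0}. x F * basis F H)"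
proof (rule ext)
  fix H assume x: "x \<in> Hc D"
  have f: "finite {F. x F \<noteq> 0}" using x by (simp add: Hc_def)
  show "x H = (\<Sum>F\<in>{F. x F \<noteq> 0}. x F * basis F H)"
    using f by (simp add: basis_def if_distrib[of "\<lambda>t. _ * t"] sum.delta' cong: if_cong)
qed

lemma morph_unique:
  assumes h: "hopf_morph D \<Psi>" and i: "intertwines D \<Psi>" and x: "x \<in> Hc D"
  shows "\<Psi> x = psi0 x"
proof -
  let ?S = "{F. x F \<noteq> 0}"
  have S: "finite ?S" "\<forall>F\<in>?S. forest_on D F" using x by (auto simp: Hc_def)
  have "\<Psi> x = \<Psi> (\<lambda>H. \<Sum>F\<in>?S. x F * basis F H)" using Hc_repr[OF x] by simp
  also have "\<dots> = (\<lambda>G. \<Sum>F\<in>?S. x F * \<Psi> (basis F) G)" by (rule morph_lin[OF h S])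
  also have "\<dots> = (\<lambda>G. \<Sum>F\<in>?S. x F * psi0 (basis F) G)"
    using morph_basis[OF h i] S by simp
  also have "\<dots> = psi0 (\<lambda>H. \<Sum>F\<in>?S. x F * basis F H)"
    by (rule morph_lin[OF psi0_hopf S, symmetric])
  also have "\<dots> = psi0 x" using Hc_repr[OF x] by simp
  finally show ?thesis .
qed

theorem mainTheorem3:
  fixes D :: "'d set"
  assumes "finite D" and "D \<noteq> {}"
  shows "(\<exists>\<Psi>. hopf_morph D \<Psi> \<and> intertwines D \<Psi>)
       \<and> (\<forall>\<Psi>1 \<Psi>2. hopf_morph D \<Psi>1 \<and> intertwines D \<Psi>1 \<and> hopf_morph D \<Psi>2 \<and> intertwines D \<Psi>2
                  \<longrightarrow> (\<forall>x\<in>Hc D. \<Psi>1 x = \<Psi>2 x))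
       \<and> (\<forall>\<Psi>. hopf_morph D \<Psi> \<and> intertwines D \<Psi> \<longrightarrow> graded_hopf_iso D \<Psi>)"
proof (intro conjI allI impI)
  show "\<exists>\<Psi>. hopf_morph D \<Psi> \<and> intertwines D \<Psi>"
    using psi0_hopf psi0_intertwines by blast
next
  fix \<Psi>1 \<Psi>2
  assume a: "hopf_morph D \<Psi>1 \<and> intertwines D \<Psi>1 \<and> hopf_morph D \<Psi>2 \<and> intertwines D \<Psi>2"
  then have h1: "hopf_morph D \<Psi>1" and i1: "intertwines D \<Psi>1"
    and h2: "hopf_morph D \<Psi>2" and i2: "intertwines D \<Psi>2" by simp_all
  show "\<forall>x\<in>Hc D. \<Psi>1 x = \<Psi>2 x"
  proof
    fix x assume x: "x \<in> Hc D"
    show "\<Psi>1 x = \<Psi>2 x"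
      using morph_unique[OF h1 i1 x] morph_unique[OF h2 i2 x] by simp
  qed
next
  fix \<Psi>
  assume a: "hopf_morph D \<Psi> \<and> intertwines D \<Psi>"
  then have h: "hopf_morph D \<Psi>" and i: "intertwines D \<Psi>" by simp_all
  have eq: "\<And>x. x \<in> Hc D \<Longrightarrow> \<Psi> x = psi0 x" by (rule morph_unique[OF h i])
  have g: "graded_map D \<Psi>"
    unfolding graded_map_def
  proof (intro allI ballI impI)
    fix n x G
    assume x: "x \<in> Hc D" and hx: "\<forall>F. x F \<noteq> 0 \<longrightarrow> fweight F = n" and nz: "\<Psi> x G \<noteq> 0"
    have "psi0 x G \<noteq> 0" using nz eq[OF x] by simp
    then show "fweight G = n"
      using psi0_graded[of D] x hx unfolding graded_map_def by blast
  qed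
  have b: "bij_betw \<Psi> (Hc D) (Dc D)"
  proof -
    have "bij_betw \<Psi> (Hc D) (Dc D) = bij_betw psi0 (Hc D) (Dc D)"
      by (rule bij_betw_cong) (rule eq)
    then show ?thesis using psi0_bij[OF assms(1)] by simp
  qed
  show "graded_hopf_iso D \<Psi>"
    unfolding graded_hopf_iso_def using h g b by simp
qed

end
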